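(* Let $\phi_1,\dots,\phi_n,\delta$ ($n\ge1$) be distinct variables, let $c_1,\dots,c_n\in[0,1]$ and $d=\mathrm{avg}(c_1,\dots,c_n)$. Let $\mathcal T$ be the theory consisting of $\phi_1,\dots,\phi_n\Rightarrow_1\delta$, $\ \sim\phi_1,\dots,\sim\phi_n\Rightarrow_1\sim\delta$, and, for $i=1,\dots,n$, $\phi_i\Rightarrow_{1-c_i}\bot$ and $\top\Rightarrow_{c_i}\phi_i$. Then $\mathcal T\vdash_{\mathsf{LGIM}}\top\Rightarrow_d\delta$ and $\mathcal T\vdash_{\mathsf{LGIM}}\delta\Rightarrow_{1-d}\bot$.
   Context: Fix a continuous t-norm $\odot$ on $[0,1]$ and let $c\oplus d = 1-((1-c)\odot(1-d))$. Write $c\odot_{\L} d=\max(c+d-1,0)$, $c\oplus_{\L} d=\min(c+d,1)$, and $\mathrm{avg}(r_1,\dots,r_n)=(r_1+\dots+r_n)/n$. Basic expressions: built from countably many variables $\phi_0,\phi_1,\dots$ and constants $\bot,\top$ by binary $\land,\lor,\odot$ and unary $\sim$. A generalised graded implication is written $\alpha_1,\dots,\alpha_n\Rightarrow_c\beta$ where $n\ge1$, $\alpha_1,\dots,\alpha_n$ is a multiset of basic expressions, $\beta$ a basic expression, $c\in[0,1]$; for $n=1$ it is a graded implication $\alpha\Rightarrow_c\beta$. Formulas of $\mathsf{LGIM}$ are built from generalised graded implications by classical $\land,\lor,\lnot$; $\Phi\to\Psi$ abbreviates $\lnot\Phi\lor\Psi$. A theory is a set of formulas. Calculus $\mathsf{LGIM}$: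 axioms are (i) all substitution instances (by generalised graded implications) of classical propositional tautologies; (ii) for all basic expressions $\alpha,\beta,\gamma$ and $c,d\in[0,1]$: ($\land_1$) $(\alpha\Rightarrow_d\beta)\land(\alpha\Rightarrow_d\gamma)\to(\alpha\Rightarrow_d\beta\land\gamma)$; ($\land_2$) $\alpha\land\beta\Rightarrow_1\alpha$; ($\land_3$) $\alpha\land\beta\Rightarrow_1\beta$; ($\lor_1$) $(\alpha\Rightarrow_d\gamma)\land(\beta\Rightarrow_d\gamma)\to(\alpha\lor\beta\Rightarrow_d\gamma)$; ($\lor_2$) $\alpha\Rightarrow_1\alpha\lor\beta$; ($\lor_3$) $\beta\Rightarrow_1\alpha\lor\beta$; ($\odot_1$) $(\top\Rightarrow_c\alpha)\land(\top\Rightarrow_d\beta)\to(\top\Rightarrow_{c\odot d}\alpha\odot\beta)$; ($\odot_2$) $(\alpha\Rightarrow_c\bot)\land(\beta\Rightarrow_d\bot)\to(\alpha\odot\beta\Rightarrow_{c\oplus d}\bot)$; ($\odot_3$) $\top\Rightarrow_1\top\odot\top$; ($\sim_1$) $(\alpha\Rightarrow_d\beta)\to(\sim\beta\Rightarrow_d\sim\alpha)$; ($\sim_2$) $\sim\sim\alpha\Rightarrow_1\alpha$; ($\sim_3$) $\alpha\Rightarrow_1\sim\sim\alpha$; ($\top$) $\alpha\Rightarrow_1\top$; ($\bot$) $\bot\Rightarrow_1\alpha$; (0) $\alpha\Rightarrow_0\beta$; ($c$) $\alpha\Rightarrow_c\alpha$; (inkons) $\lnot(\top\Rightarrow_c\bot)$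 for $c>0$; (trans$_1$) $(\alpha\Rightarrow_c\beta)\land(\beta\Rightarrow_d\gamma)\to(\alpha\Rightarrow_{c\odot_{\L}d}\gamma)$; (trans$_2$) $(\alpha\Rightarrow_c\bot)\land(\top\Rightarrow_d\beta)\to(\alpha\Rightarrow_{c\oplus_{\L}d}\beta)$; (lin$_1$) $(\alpha\Rightarrow_1\beta)\lor(\beta\Rightarrow_1\alpha)$; (lin$_2$) $(\top\Rightarrow_d\alpha)\lor(\alpha\Rightarrow_{1-d}\bot)$; (iii) for all basic expressions $\alpha,\alpha_i,\beta_i,\beta,\gamma$ and $c,c_i,d\in[0,1]$: (trans$\varnothing_1$) $(\alpha_1\Rightarrow_{c_1}\beta_1)\land\dots\land(\alpha_n\Rightarrow_{c_n}\beta_n)\land(\beta_1,\dots,\beta_n\Rightarrow_d\gamma)\to(\alpha_1,\dots,\alpha_n\Rightarrow_{\mathrm{avg}(c_1,\dots,c_n)\odot_{\L}d}\gamma)$; (trans$\varnothing_2$) $(\alpha_1,\dots,\alpha_n\Rightarrow_c\beta)\land(\beta\Rightarrow_d\gamma)\to(\alpha_1,\dots,\alpha_n\Rightarrow_{c\odot_{\L}d}\gamma)$; (trans$\varnothing_3$) $(\alpha_1\Rightarrow_{c_1}\bot)\land\dots\land(\alpha_n\Rightarrow_{c_n}\bot)\land(\top\Rightarrow_d\beta)\to(\alpha_1,\dots,\alpha_n\Rightarrow_{\mathrm{avg}(c_1,\dots,c_n)\oplus_{\L}d}\beta)$; ($\top\varnothing$) $(\top,\dots,\top\Rightarrow_c\alpha)\to(\top\Rightarrow_c\alpha)$.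 The only rule is modus ponens. $\mathcal T\vdash_{\mathsf{LGIM}}\Phi$ means $\Phi$ has a finite derivation from axioms and elements of $\mathcal T$ by modus ponens. *)

theory Defs
  imports "HOL-Analysis.Analysis" "HOL-Library.Multiset"
begin

definition is_cont_tnorm :: "(real \<Rightarrow> real \<Rightarrow> real) \<Rightarrow> bool" where
  "is_cont_tnorm T \<longleftrightarrow>
     (\<forall>x\<in>{0..1}. \<forall>y\<in>{0..1}. T x y \<in> {0..1}) \<and>
     (\<forall>x\<in>{0..1}. \<forall>y\<in>{0..1}. T x y = T y x) \<and>
     (\<forall>x\<in>{0..1}. \<forall>y\<in>{0..1}. \<forall>z\<in>{0..1}. T (T x y) z = T x (T y z)) \<and>
     (\<forall>x\<in>{0..1}. \<forall>y\<in>{0..1}. \<forall>z\<in>{0..1}. x \<le> y \<longrightarrow> T x z \<le> T y z) \<and>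
     (\<forall>x\<in>{0..1}. T x 1 = x) \<and>
     continuous_on ({0..1} \<times> {0..1}) (\<lambda>(x, y). T x y)"

definition tconorm :: "(real \<Rightarrow> real \<Rightarrow> real) \<Rightarrow> real \<Rightarrow> real \<Rightarrow> real" where
  "tconorm T c d = 1 - T (1 - c) (1 - d)"

definition luk_and :: "real \<Rightarrow> real \<Rightarrow> real" where
  "luk_and c d = max (c + d - 1) 0"

definition luk_or :: "real \<Rightarrow> real \<Rightarrow> real" where
  "luk_or c d = min (c + d) 1"

definition avg :: "real list \<Rightarrow> real" where
  "avg cs = sum_list cs / real (length cs)"

datatype bexp = BVar nat | BBot | BTop | BAnd bexp bexp | BOr bexp bexp
  | BOdot bexp bexp | BNeg bexp

text \<open>Formulas of LGIM: classical combinations of generalised graded implications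
  GImp M b c, standing for  alpha_1,...,alpha_n =>_c b  where M is the multiset
  of the alpha_i.\<close>
datatype fml = GImp "bexp multiset" bexp real | FAnd fml fml | FOr fml fml | FNot fml

definition gimp :: "bexp \<Rightarrow> bexp \<Rightarrow> real \<Rightarrow> fml" where
  "gimp a b c = GImp {#a#} b c"

definition FImp :: "fml \<Rightarrow> fml \<Rightarrow> fml" where
  "FImp P Q = FOr (FNot P) Q"

fun FConj :: "fml list \<Rightarrow> fml" where
  "FConj [] = FNot (FAnd (GImp {#BTop#} BTop 0) (FNot (GImp {#BTop#} BTop 0)))"
| "FConj [P] = P"
| "FConj (P # Ps) = FAnd P (FConj Ps)"

fun wf :: "fml \<Rightarrow> bool" where
  "wf (GImp M b c) \<longleftrightarrow> M \<noteq> {#} \<and> 0 \<le> c \<and> c \<le> 1"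
| "wf (FAnd P Q) \<longleftrightarrow> wf P \<and> wf Q"
| "wf (FOr P Q) \<longleftrightarrow> wf P \<and> wf Q"
| "wf (FNot P) \<longleftrightarrow> wf P"

fun ceval :: "(bexp multiset \<Rightarrow> bexp \<Rightarrow> real \<Rightarrow> bool) \<Rightarrow> fml \<Rightarrow> bool" where
  "ceval v (GImp M b c) = v M b c"
| "ceval v (FAnd P Q) = (ceval v P \<and> ceval v Q)"
| "ceval v (FOr P Q) = (ceval v P \<or> ceval v Q)"
| "ceval v (FNot P) = (\<not> ceval v P)"

text \<open>A formula is a substitution instance of a classical tautology iff it is
  true under every assignment of truth values to its atoms.\<close>
definition ctaut :: "fml \<Rightarrow> bool" where
  "ctaut P \<longleftrightarrow> wf P \<and> (\<forall>v. ceval v P)"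

abbreviation unit01 :: "real \<Rightarrow> bool" where
  "unit01 x \<equiv> 0 \<le> x \<and> x \<le> 1"

inductive lgim_axiom :: "(real \<Rightarrow> real \<Rightarrow> real) \<Rightarrow> fml \<Rightarrow> bool" for T where
  taut: "ctaut P \<Longrightarrow> lgim_axiom T P"
| and1: "unit01 d \<Longrightarrow> lgim_axiom T (FImp (FAnd (gimp a b d) (gimp a g d)) (gimp a (BAnd b g) d))"
| and2: "lgim_axiom T (gimp (BAnd a b) a 1)"
| and3: "lgim_axiom T (gimp (BAnd a b) b 1)"
| or1: "unit01 d \<Longrightarrow> lgim_axiom T (FImp (FAnd (gimp a g d) (gimp b g d)) (gimp (BOr a b) g d))"
| or2: "lgim_axiom T (gimp a (BOr a b) 1)"
| or3: "lgim_axiom T (gimp b (BOr a b) 1)"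
| odot1: "unit01 c \<Longrightarrow> unit01 d \<Longrightarrow>
    lgim_axiom T (FImp (FAnd (gimp BTop a c) (gimp BTop b d)) (gimp BTop (BOdot a b) (T c d)))"
| odot2: "unit01 c \<Longrightarrow> unit01 d \<Longrightarrow>
    lgim_axiom T (FImp (FAnd (gimp a BBot c) (gimp b BBot d)) (gimp (BOdot a b) BBot (tconorm T c d)))"
| odot3: "lgim_axiom T (gimp BTop (BOdot BTop BTop) 1)"
| neg1: "unit01 d \<Longrightarrow> lgim_axiom T (FImp (gimp a b d) (gimp (BNeg b) (BNeg a) d))"
| neg2: "lgim_axiom T (gimp (BNeg (BNeg a)) a 1)"
| neg3: "lgim_axiom T (gimp a (BNeg (BNeg a)) 1)"
| top: "lgim_axiom T (gimp a BTop 1)"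
| bot: "lgim_axiom T (gimp BBot a 1)"
| zero: "lgim_axiom T (gimp a b 0)"
| refl: "unit01 c \<Longrightarrow> lgim_axiom T (gimp a a c)"
| inkons: "0 < c \<Longrightarrow> c \<le> 1 \<Longrightarrow> lgim_axiom T (FNot (gimp BTop BBot c))"
| trans1: "unit01 c \<Longrightarrow> unit01 d \<Longrightarrow>
    lgim_axiom T (FImp (FAnd (gimp a b c) (gimp b g d)) (gimp a g (luk_and c d)))"
| trans2: "unit01 c \<Longrightarrow> unit01 d \<Longrightarrow>
    lgim_axiom T (FImp (FAnd (gimp a BBot c) (gimp BTop b d)) (gimp a b (luk_or c d)))"
| lin1: "lgim_axiom T (FOr (gimp a b 1) (gimp b a 1))"
| lin2: "unit01 d \<Longrightarrow> lgim_axiom T (FOr (gimp BTop a d) (gimp a BBot (1 - d)))"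
| transM1: "length as = n \<Longrightarrow> length bs = n \<Longrightarrow> length cs = n \<Longrightarrow> n \<ge> 1 \<Longrightarrow>
    (\<forall>c\<in>set cs. unit01 c) \<Longrightarrow> unit01 d \<Longrightarrow>
    lgim_axiom T (FImp
      (FAnd (FConj (map (\<lambda>i. gimp (as ! i) (bs ! i) (cs ! i)) [0..<n])) (GImp (mset bs) g d))
      (GImp (mset as) g (luk_and (avg cs) d)))"
| transM2: "M \<noteq> {#} \<Longrightarrow> unit01 c \<Longrightarrow> unit01 d \<Longrightarrow>
    lgim_axiom T (FImp (FAnd (GImp M b c) (gimp b g d)) (GImp M g (luk_and c d)))"
| transM3: "length as = n \<Longrightarrow> length cs = n \<Longrightarrow> n \<ge> 1 \<Longrightarrow>
    (\<forall>c\<in>set cs. unit01 c) \<Longrightarrow> unit01 d \<Longrightarrow>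
    lgim_axiom T (FImp
      (FAnd (FConj (map (\<lambda>i. gimp (as ! i) BBot (cs ! i)) [0..<n])) (gimp BTop b d))
      (GImp (mset as) b (luk_or (avg cs) d)))"
| topM: "n \<ge> 1 \<Longrightarrow> unit01 c \<Longrightarrow>
    lgim_axiom T (FImp (GImp (replicate_mset n BTop) a c) (gimp BTop a c))"

inductive derivable :: "(real \<Rightarrow> real \<Rightarrow> real) \<Rightarrow> fml set \<Rightarrow> fml \<Rightarrow> bool" for T Th where
  ax: "lgim_axiom T P \<Longrightarrow> derivable T Th P"
| hyp: "P \<in> Th \<Longrightarrow> derivable T Th P"
| mp: "derivable T Th (FImp P Q) \<Longrightarrow> derivable T Th P \<Longrightarrow> derivable T Th Q"

end

theory Submission
  imports Defs
begin

lemma and_der: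
  assumes "derivable T Th P" "derivable T Th Q" "wf P" "wf Q"
  shows "derivable T Th (FAnd P Q)"
proof -
  have "lgim_axiom T (FImp P (FImp Q (FAnd P Q)))"
    by (rule lgim_axiom.taut) (auto simp: ctaut_def FImp_def assms)
  then show ?thesis using assms by (meson derivable.intros)
qed

lemma wf_FConj: "L \<noteq> [] \<Longrightarrow> \<forall>P\<in>set L. wf P \<Longrightarrow> wf (FConj L)"
  by (induction L rule: FConj.induct) auto

lemma conj_der: "L \<noteq> [] \<Longrightarrow> \<forall>P\<in>set L. derivable T Th P \<and> wf P \<Longrightarrow> derivable T Th (FConj L)"
proof (induction L rule: FConj.induct)
  case (3 P v va)
  then show ?case using and_der[of T Th P "FConj (v # va)"] wf_FConj[of "v#va"] by auto
qed auto

lemma mp2: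
  assumes "derivable T Th (FImp (FAnd P Q) R)" "derivable T Th P" "derivable T Th Q" "wf P" "wf Q"
  shows "derivable T Th R"
  using assms and_der derivable.mp by blast

lemma ax': "lgim_axiom T P \<Longrightarrow> derivable T Th P" by (rule derivable.ax)

lemma wf_gimp[simp]: "wf (gimp a b c) = (0 \<le> c \<and> c \<le> 1)" by (simp add: gimp_def)

lemma trans_der:
  assumes "derivable T Th (gimp a b c)" "derivable T Th (gimp b g e)" "unit01 c" "unit01 e"
  shows "derivable T Th (gimp a g (luk_and c e))"
  using mp2[OF ax'[OF lgim_axiom.trans1[of c e T a b g]] assms(1,2)] assms by auto

lemma neg_der:
  assumes "derivable T Th (gimp a b c)" "unit01 c"
  shows "derivable T Th (gimp (BNeg b) (BNeg a) c)"
  using derivable.mp[OF ax'[OF lgim_axiom.neg1[of c T a b]] assms(1)] assms by auto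

lemma luk1[simp]: "unit01 x \<Longrightarrow> luk_and x 1 = x" "unit01 x \<Longrightarrow> luk_and 1 x = x"
  by (auto simp: luk_and_def)

theorem mainTheorem10:
  fixes T :: "real \<Rightarrow> real \<Rightarrow> real"
    and n :: nat and p :: "nat \<Rightarrow> nat" and k :: nat and c :: "nat \<Rightarrow> real"
  assumes "is_cont_tnorm T"
    and "n \<ge> 1"
    and "inj_on p {..<n}"
    and "k \<notin> p ` {..<n}"
    and "\<forall>i<n. 0 \<le> c i \<and> c i \<le> 1"
    and "d = (\<Sum>i<n. c i) / real n"
    and "Th = {GImp (mset (map (\<lambda>i. BVar (p i)) [0..<n])) (BVar k) 1,
               GImp (mset (map (\<lambda>i. BNeg (BVar (p i))) [0..<n])) (BNeg (BVar k)) 1}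
             \<union> (\<Union>i\<in>{..<n}. {gimp (BVar (p i)) BBot (1 - c i), gimp BTop (BVar (p i)) (c i)})"
  shows "derivable T Th (gimp BTop (BVar k) d) \<and> derivable T Th (gimp (BVar k) BBot (1 - d))"
proof -
  have cu: "\<And>i. i < n \<Longrightarrow> unit01 (c i)" using assms(5) by auto
  have d01: "unit01 d"
  proof -
    have "(\<Sum>i<n. c i) \<ge> 0" using cu by (intro sum_nonneg) auto
    moreover have "(\<Sum>i<n. c i) \<le> (\<Sum>i<n. 1)" using cu by (intro sum_mono) auto
    ultimately show ?thesis using assms(2,6) by (simp add: divide_le_eq_1 divide_nonneg_nonneg)
  qed
  have nne: "[0..<n] \<noteq> []" using assms(2) by simp
  define cs where "cs = map c [0..<n]"
  have avg1: "avg cs = d"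
    by (simp add: avg_def cs_def assms(6) sum_set_upt_conv_sum_list_nat[symmetric] lessThan_atLeast0)
  have c1: "derivable T Th (FConj (map (\<lambda>i. gimp (replicate n BTop ! i) (map (\<lambda>i. BVar (p i)) [0..<n] ! i) (cs ! i)) [0..<n]))"
    using nne by (intro conj_der) (auto simp: cs_def assms(7) cu intro!: derivable.hyp)
  have h1: "derivable T Th (GImp (mset (map (\<lambda>i. BVar (p i)) [0..<n])) (BVar k) 1)"
    by (rule derivable.hyp) (simp add: assms(7))
  have "derivable T Th (GImp (mset (replicate n BTop)) (BVar k) (luk_and (avg cs) 1))"
    apply (rule mp2[OF ax'[OF lgim_axiom.transM1[of "replicate n BTop" n "map (\<lambda>i. BVar (p i)) [0..<n]" cs 1 T "BVar k"]] c1 h1])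
    using assms(2) cu nne by (auto simp: cs_def intro!: wf_FConj simp: mset_set_empty_iff)
  then have "derivable T Th (GImp (replicate_mset n BTop) (BVar k) d)"
    using avg1 d01 by simp
  then have P1: "derivable T Th (gimp BTop (BVar k) d)"
    using derivable.mp[OF ax'[OF lgim_axiom.topM[of n d T "BVar k"]]] assms(2) d01 by auto
  have tb: "derivable T Th (gimp BTop (BNeg BBot) 1)"
  proof -
    have "derivable T Th (gimp (BNeg (BNeg BTop)) (BNeg BBot) 1)"
      using neg_der[OF ax'[OF lgim_axiom.bot[of T "BNeg BTop"]]] by simp
    from trans_der[OF ax'[OF lgim_axiom.neg3[of T BTop]] this] show ?thesis by simp
  qed
  have nt: "derivable T Th (gimp (BNeg BTop) BBot 1)"
  proof -
    have "derivable T Th (gimp (BNeg BTop) (BNeg (BNeg BBot)) 1)"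
      using neg_der[OF ax'[OF lgim_axiom.top[of T "BNeg BBot"]]] by simp
    from trans_der[OF this ax'[OF lgim_axiom.neg2[of T BBot]]] show ?thesis by simp
  qed
  define ds where "ds = map (\<lambda>i. 1 - c i) [0..<n]"
  have avg2: "avg ds = 1 - d"
  proof -
    have "sum_list ds = (\<Sum>i<n. (1 - c i))"
      by (simp add: ds_def sum_set_upt_conv_sum_list_nat[symmetric] lessThan_atLeast0)
    also have "\<dots> = real n - (\<Sum>i<n. c i)" by (simp add: sum_subtractf)
    finally show ?thesis using assms(2,6) by (simp add: avg_def ds_def divide_simps algebra_simps)
  qed
  have ei: "derivable T Th (gimp BTop (BNeg (BVar (p i))) (1 - c i))" if "i < n" for i
  proof -
    have "derivable T Th (gimp (BVar (p i)) BBot (1 - c i))"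
      by (rule derivable.hyp) (use that in \<open>auto simp: assms(7)\<close>)
    from neg_der[OF this] have "derivable T Th (gimp (BNeg BBot) (BNeg (BVar (p i))) (1 - c i))"
      using cu[OF that] by simp
    from trans_der[OF tb this] show ?thesis using cu[OF that] by simp
  qed
  have c2: "derivable T Th (FConj (map (\<lambda>i. gimp (replicate n BTop ! i) (map (\<lambda>i. BNeg (BVar (p i))) [0..<n] ! i) (ds ! i)) [0..<n]))"
    using nne by (intro conj_der) (auto simp: ds_def ei cu intro!: derivable.hyp)
  have h2: "derivable T Th (GImp (mset (map (\<lambda>i. BNeg (BVar (p i))) [0..<n])) (BNeg (BVar k)) 1)"
    by (rule derivable.hyp) (simp add: assms(7))
  have "derivable T Th (GImp (mset (replicate n BTop)) (BNeg (BVar k)) (luk_and (avg ds) 1))"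
    apply (rule mp2[OF ax'[OF lgim_axiom.transM1[of "replicate n BTop" n "map (\<lambda>i. BNeg (BVar (p i))) [0..<n]" ds 1 T "BNeg (BVar k)"]] c2 h2])
    using assms(2) cu nne by (auto simp: ds_def intro!: wf_FConj simp: mset_set_empty_iff)
  then have "derivable T Th (GImp (replicate_mset n BTop) (BNeg (BVar k)) (1 - d))"
    using avg2 d01 by simp
  then have "derivable T Th (gimp BTop (BNeg (BVar k)) (1 - d))"
    using derivable.mp[OF ax'[OF lgim_axiom.topM[of n "1 - d" T "BNeg (BVar k)"]]] assms(2) d01 by auto
  from neg_der[OF this] have "derivable T Th (gimp (BNeg (BNeg (BVar k))) (BNeg BTop) (1 - d))"
    using d01 by simp
  from trans_der[OF ax'[OF lgim_axiom.neg3[of T "BVar k"]] this] have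
    "derivable T Th (gimp (BVar k) (BNeg BTop) (1 - d))" using d01 by simp
  from trans_der[OF this nt] have P2: "derivable T Th (gimp (BVar k) BBot (1 - d))" using d01 by simp
  show ?thesis using P1 P2 by simp
qed

end
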